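(* Let $q=2$. Under $G_2$ there are exactly $4$ plane orbits and $4$ point orbits, namely: planes: $\mathcal N_1=\{\Gamma\text{-planes}\}\cup\{\overline{1_{\mathscr C}}\text{-planes}\}$ of size $3+3=6$; $\mathcal N_2=\{2_{\mathscr C}\text{-planes}\}$ of size $6$; $\mathcal N_3=\{3_{\mathscr C}\text{-planes}\}$ of size $1$; $\mathcal N_4=\{0_{\mathscr C}\text{-planes}\}$ of size $2$; points: $\mathcal M_1=\{\mathscr C\text{-points}\}$ of size $3$; $\mathcal M_2=\{\text{T-points}\}\cup\{0_\Gamma\text{-points}\}$ of size $6+2=8$; $\mathcal M_3=\{3_\Gamma\text{-points}\}$ of size $1$; $\mathcal M_4=\{1_\Gamma\text{-points}\}$ of size $3$.
   Context: Notation. $\mathbb F_q$ is the field with $q$ elements, $\mathbb F_q^+=\mathbb F_q\cup\{\infty\}$. Points of $\mathrm{PG}(3,q)$ are written $\mathbf P(x_0,x_1,x_2,x_3)$ with $x$ a nonzero row vector up to scalars; $\boldsymbol\pi(c_0,c_1,c_2,c_3)$ is the plane $c_0x_0+c_1x_1+c_2x_2+c_3x_3=0$. Put $P(t)=\mathbf P(t^3,t^2,t,1)$ for $t\in\mathbb F_q$, $P(\infty)=\mathbf P(1,0,0,0)$, and $\mathscr C=\{P(t):t\in\mathbb F_q^+\}$ (the twisted cubic). The osculating planes are $\pi_{\rm osc}(t)=\boldsymbol\pi(1,-3t,3t^2,-t^3)$ ($t\in\mathbb F_q$) and $\pi_{\rm osc}(\infty)=\boldsymbol\pi(0,0,0,1)$;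 these $q+1$ planes are called $\Gamma$-planes. The tangent at $P(t)$, $t\in\mathbb F_q$, is the line through $P(t)$ and $\mathbf P(3t^2,2t,1,0)$; the tangent at $P(\infty)$ is the line through $\mathbf P(1,0,0,0)$ and $\mathbf P(0,1,0,0)$. $G_q$ is the group of all projectivities of $\mathrm{PG}(3,q)$ mapping $\mathscr C$ onto itself. Plane types: $\Gamma$-plane = osculating plane; $\overline{1_{\mathscr C}}$-plane = non-osculating plane meeting $\mathscr C$ in exactly one point; $d_{\mathscr C}$-plane ($d\in\{0,2,3\}$) = plane meeting $\mathscr C$ in exactly $d$ points. Point types (for $q\not\equiv0\pmod 3$): $\mathscr C$-point = point of $\mathscr C$; T-point = point off $\mathscr C$ on some tangent; for $\mu\in\{0,1,3\}$, $\mu_\Gamma$-point = point off $\mathscr C$, on no tangent, lying on exactly $\mu$ $\Gamma$-planes. *)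

theory Defs
  imports "HOL-Analysis.Analysis" "HOL-Library.Z2"
begin

text \<open>Projective space PG(3,q) over a field 'a: vectors are 'a^4 (coordinate i = 1..4
  corresponds to x_0..x_3); a point is the set of nonzero scalar multiples of a nonzero
  vector; a plane is identified with the set of points lying on it.\<close>

type_synonym 'a pt = "('a ^ 4) set"

definition Pt :: "'a::field ^ 4 \<Rightarrow> 'a pt" where
  "Pt x = {c *s x | c. c \<noteq> 0}"

definition points :: "'a::field pt set" where
  "points = {Pt x | x. x \<noteq> 0}"

definition pdot :: "'a::field ^ 4 \<Rightarrow> 'a ^ 4 \<Rightarrow> 'a" where
  "pdot c x = (\<Sum>i\<in>UNIV. c $ i * x $ i)"

definition plane :: "'a::field ^ 4 \<Rightarrow> 'a pt set" where
  "plane c = {Pt x | x. x \<noteq> 0 \<and> pdot c x = 0}"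

definition planes :: "'a::field pt set set" where
  "planes = {plane c | c. c \<noteq> 0}"

definition line :: "'a::field ^ 4 \<Rightarrow> 'a ^ 4 \<Rightarrow> 'a pt set" where
  "line u v = {Pt (a *s u + b *s v) | a b. a *s u + b *s v \<noteq> 0}"

text \<open>Twisted cubic; None stands for the parameter infinity.\<close>
definition cubvec :: "'a::field option \<Rightarrow> 'a ^ 4" where
  "cubvec t = (case t of None \<Rightarrow> vector [1, 0, 0, 0]
                       | Some s \<Rightarrow> vector [s ^ 3, s ^ 2, s, 1])"

definition Cub :: "'a::field pt set" where
  "Cub = {Pt (cubvec t) | t. True}"

definition osc :: "'a::field option \<Rightarrow> 'a pt set" where
  "osc t = (case t of None \<Rightarrow> plane (vector [0, 0, 0, 1])
                    | Some s \<Rightarrow> plane (vector [1, - 3 * s, 3 * s ^ 2, - (s ^ 3)]))"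

definition tangent :: "'a::field option \<Rightarrow> 'a pt set" where
  "tangent t = (case t of None \<Rightarrow> line (vector [1, 0, 0, 0]) (vector [0, 1, 0, 0])
                        | Some s \<Rightarrow> line (cubvec (Some s)) (vector [3 * s ^ 2, 2 * s, 1, 0]))"

definition Gamma_planes :: "'a::field pt set set" where
  "Gamma_planes = {osc t | t. True}"

definition onebar_planes :: "'a::field pt set set" where
  "onebar_planes = {\<pi> \<in> planes. \<pi> \<notin> Gamma_planes \<and> card (\<pi> \<inter> Cub) = 1}"

definition dC_planes :: "nat \<Rightarrow> 'a::field pt set set" where
  "dC_planes d = {\<pi> \<in> planes. card (\<pi> \<inter> Cub) = d}"

definition C_points :: "'a::field pt set" where
  "C_points = Cub"

definition T_points :: "'a::field pt set" where
  "T_points = {P \<in> points. P \<notin> Cub \<and> (\<exists>t. P \<in> tangent t)}"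

definition muGamma_points :: "nat \<Rightarrow> 'a::field pt set" where
  "muGamma_points mu = {P \<in> points. P \<notin> Cub \<and> (\<forall>t. P \<notin> tangent t)
                          \<and> card {\<pi> \<in> Gamma_planes. P \<in> \<pi>} = mu}"

definition proj_pt :: "'a::field ^ 4 ^ 4 \<Rightarrow> 'a pt \<Rightarrow> 'a pt" where
  "proj_pt A P = (\<lambda>x. x v* A) ` P"

definition proj_plane :: "'a::field ^ 4 ^ 4 \<Rightarrow> 'a pt set \<Rightarrow> 'a pt set" where
  "proj_plane A \<pi> = proj_pt A ` \<pi>"

definition Gq :: "('a::field ^ 4 ^ 4) set" where
  "Gq = {A. invertible A \<and> proj_pt A ` Cub = Cub}"

definition plane_orbits :: "'a::field pt set set set" where
  "plane_orbits = {{proj_plane A \<pi> | A. A \<in> Gq} | \<pi>. \<pi> \<in> planes}"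

definition point_orbits :: "'a::field pt set set" where
  "point_orbits = {{proj_pt A P | A. A \<in> Gq} | P. P \<in> points}"

end

theory Submission imports Defs begin

abbreviation V4 :: "bit \<Rightarrow> bit \<Rightarrow> bit \<Rightarrow> bit \<Rightarrow> bit^4" where
  "V4 a b c d \<equiv> vector [a, b, c, d]"

lemma vector_4 [simp]:
 "(vector [x,y,z,w] ::('a::zero)^4)$1 = x"
 "(vector [x,y,z,w] ::('a::zero)^4)$2 = y"
 "(vector [x,y,z,w] ::('a::zero)^4)$3 = z"
 "(vector [x,y,z,w] ::('a::zero)^4)$4 = w"
  unfolding vector_def by simp_all

lemma vec4_eta: "(x::'a::zero^4) = vector [x$1, x$2, x$3, x$4]"
  unfolding vec_eq_iff by (metis (mono_tags) exhaust_4 vector_4)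

lemma V4_eq [simp]: "(vector [a,b,c,d] :: 'a::zero^4) = vector [a',b',c',d'] \<longleftrightarrow> a=a' \<and> b=b' \<and> c=c' \<and> d=d'"
  by (auto simp: vec_eq_iff forall_4)

lemma forall_vec4: "(\<forall>x::'a::zero^4. P x) \<longleftrightarrow> (\<forall>a b c d. P (vector [a,b,c,d]))"
  by (metis vec4_eta)

lemma exists_vec4: "(\<exists>x::'a::zero^4. P x) \<longleftrightarrow> (\<exists>a b c d. P (vector [a,b,c,d]))"
  by (metis vec4_eta)

lemma forall_bit: "(\<forall>a::bit. P a) \<longleftrightarrow> P 0 \<and> P 1"
  by (metis bit_not_zero_iff)

lemma exists_bit: "(\<exists>a::bit. P a) \<longleftrightarrow> P 0 \<or> P 1"
  by (metis bit_not_zero_iff)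

lemmas sum4 = sum_4

lemma V4_add [simp]: "vector [a,b,c,d] + vector [a',b',c',d'] = (vector [a+a',b+b',c+c',d+d'] :: 'a::monoid_add^4)"
  by (simp add: vec_eq_iff forall_4)

lemma zero_V4: "(0::'a::zero^4) = vector [0,0,0,0]"
  by (simp add: vec_eq_iff forall_4)

lemma pdot_V4 [simp]: "pdot (vector [a,b,c,d]) (vector [a',b',c',d']) = a*a'+b*b'+c*c'+d*d'"
  by (simp add: pdot_def sum4)

lemma vm_V4: "(vector [a,b,c,d] :: 'a::field^4) v* M = a *s M$1 + b *s M$2 + c *s M$3 + d *s M$4"
  by (simp add: vector_matrix_mult_def vec_eq_iff sum4 forall_4 mult.commute)

lemma smult_V4 [simp]: "k *s (vector [a,b,c,d] :: 'a::ring^4) = vector [k*a,k*b,k*c,k*d]"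
  by (simp add: vec_eq_iff forall_4)

lemma mv_V4: "(M :: 'a::field^4^4) *v (vector [a,b,c,d]) = vector [pdot (M$1) (vector [a,b,c,d]), pdot (M$2) (vector [a,b,c,d]), pdot (M$3) (vector [a,b,c,d]), pdot (M$4) (vector [a,b,c,d])]"
  by (simp add: matrix_vector_mult_def vec_eq_iff forall_4 pdot_def)


abbreviation sngs :: "'b set \<Rightarrow> 'b set set" where "sngs S \<equiv> (\<lambda>x. {x}) ` S"

lemma inj_sng: "inj (\<lambda>x. {x})" by (auto simp: inj_def)

lemma Pt_bit: "Pt (x::bit^4) = {x}"
  unfolding Pt_def by auto

definition Zs :: "bit^4 \<Rightarrow> (bit^4) set" where "Zs c = {x. x \<noteq> 0 \<and> pdot c x = 0}"

lemma points_bit: "(points :: bit pt set) = sngs {x. x \<noteq> 0}"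
  unfolding points_def Pt_bit by auto

lemma plane_bit: "plane c = sngs (Zs c)"
  unfolding plane_def Pt_bit Zs_def by auto

lemma planes_bit: "(planes :: bit pt set set) = plane ` {c. c \<noteq> 0}"
  unfolding planes_def by auto

lemma line_bit: "line (u::bit^4) v = sngs ({u, v, u + v} - {0})"
  unfolding line_def Pt_bit
  by (auto simp: exists_bit forall_bit)

lemma UNIV_opt: "(UNIV :: bit option set) = {None, Some 0, Some 1}"
proof -
  { fix x :: "bit option" have "x \<in> {None, Some 0, Some 1}" by (cases x) auto }
  then show ?thesis by auto
qed

definition CV :: "(bit^4) set" where "CV = {V4 1 0 0 0, V4 0 0 0 1, V4 1 1 1 1}"

lemma cubvec_vals: "cubvec None = V4 1 0 0 0" "cubvec (Some 0) = V4 0 0 0 1" "cubvec (Some (1::bit)) = V4 1 1 1 1"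
  by (simp_all add: cubvec_def)

lemma Cub_bit: "(Cub :: bit pt set) = sngs CV"
proof -
  have "(Cub :: bit pt set) = (\<lambda>t. {cubvec t}) ` UNIV" unfolding Cub_def Pt_bit by auto
  also have "\<dots> = sngs CV" unfolding UNIV_opt CV_def by (simp add: cubvec_vals)
  finally show ?thesis .
qed

definition GC :: "(bit^4) set" where "GC = {V4 0 0 0 1, V4 1 0 0 0, V4 1 1 1 1}"

lemma osc_vals: "osc None = plane (V4 0 0 0 1)" "osc (Some 0) = plane (V4 1 0 0 0)" "osc (Some (1::bit)) = plane (V4 1 1 1 1)"
  by (simp_all add: osc_def)

lemma Gamma_bit: "(Gamma_planes :: bit pt set set) = plane ` GC"
proof -
  have "(Gamma_planes :: bit pt set set) = osc ` UNIV" unfolding Gamma_planes_def by auto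
  also have "\<dots> = plane ` GC" unfolding UNIV_opt GC_def by (simp add: osc_vals)
  finally show ?thesis .
qed

definition TV :: "(bit^4) set" where
  "TV = {V4 1 0 0 0, V4 0 1 0 0, V4 1 1 0 0, V4 0 0 0 1, V4 0 0 1 0, V4 0 0 1 1, V4 1 1 1 1, V4 1 0 1 0, V4 0 1 0 1}"

lemma tangent_vals: "tangent None = sngs ({V4 1 0 0 0, V4 0 1 0 0, V4 1 1 0 0} - {0})"
   "tangent (Some 0) = sngs ({V4 0 0 0 1, V4 0 0 1 0, V4 0 0 1 1} - {0})"
   "tangent (Some (1::bit)) = sngs ({V4 1 1 1 1, V4 1 0 1 0, V4 0 1 0 1} - {0})"
  by (simp_all add: tangent_def line_bit cubvec_vals)

lemma plane_inj: "inj (plane :: bit^4 \<Rightarrow> _)"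
proof (rule injI)
  fix c c' :: "bit^4"
  assume "plane c = plane c'"
  then have Z: "Zs c = Zs c'" unfolding plane_bit using inj_sng by (simp add: inj_image_eq_iff)
  have "\<And>x. x \<noteq> 0 \<Longrightarrow> pdot c x = 0 \<longleftrightarrow> pdot c' x = 0"
    using Z unfolding Zs_def set_eq_iff by blast
  note h = this[of "V4 1 0 0 0"] this[of "V4 0 1 0 0"] this[of "V4 0 0 1 0"] this[of "V4 0 0 0 1"]
  obtain a b d e where c: "c = V4 a b d e" by (metis vec4_eta)
  obtain a' b' d' e' where c': "c' = V4 a' b' d' e'" by (metis vec4_eta)
  show "c = c'" using h unfolding c c' by (simp add: zero_V4) (metis bit_not_zero_iff)
qed

lemma card_sngs [simp]: "card (sngs A) = card A"
  by (rule card_image) (simp add: inj_on_def)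

lemma cnt_plane: "card (plane c \<inter> Cub) = card (Zs c \<inter> CV)"
  unfolding plane_bit Cub_bit image_Int[OF inj_sng, symmetric]
  by simp

lemma dC_bit: "dC_planes d = plane ` {c. c \<noteq> 0 \<and> card (Zs c \<inter> CV) = d}"
  unfolding dC_planes_def planes_bit cnt_plane[symmetric] by auto


definition PC0 :: "(bit^4) set" where "PC0 = {V4 1 0 1 1, V4 1 1 0 1}"
definition PC1 :: "(bit^4) set" where "PC1 = {V4 0 0 0 1, V4 0 1 1 1, V4 1 0 0 0, V4 1 0 0 1, V4 1 1 1 0, V4 1 1 1 1}"
definition PC2 :: "(bit^4) set" where "PC2 = {V4 0 0 1 0, V4 0 0 1 1, V4 0 1 0 0, V4 0 1 0 1, V4 1 0 1 0, V4 1 1 0 0}"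
definition PC3 :: "(bit^4) set" where "PC3 = {V4 0 1 1 0}"

lemma PC0_eq: "{c. c \<noteq> 0 \<and> card (Zs c \<inter> CV) = 0} = PC0"
  by (simp add: set_eq_iff forall_vec4 forall_bit zero_V4 Zs_def CV_def PC0_def)
lemma PC1_eq: "{c. c \<noteq> 0 \<and> card (Zs c \<inter> CV) = 1} = PC1"
  by (simp add: set_eq_iff forall_vec4 forall_bit zero_V4 Zs_def CV_def PC1_def)
lemma PC2_eq: "{c. c \<noteq> 0 \<and> card (Zs c \<inter> CV) = 2} = PC2"
  by (simp add: set_eq_iff forall_vec4 forall_bit zero_V4 Zs_def CV_def PC2_def)
lemma PC3_eq: "{c. c \<noteq> 0 \<and> card (Zs c \<inter> CV) = 3} = PC3"
  by (simp add: set_eq_iff forall_vec4 forall_bit zero_V4 Zs_def CV_def PC3_def)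
lemma PC_all: "c \<in> PC0 \<or> c \<in> PC1 \<or> c \<in> PC2 \<or> c \<in> PC3" if "(c::bit^4) \<noteq> 0" for c
proof -
  have "\<forall>c::bit^4. c \<noteq> 0 \<longrightarrow> c \<in> PC0 \<or> c \<in> PC1 \<or> c \<in> PC2 \<or> c \<in> PC3"
    by (simp add: forall_vec4 forall_bit zero_V4 PC0_def PC1_def PC2_def PC3_def)
  then show ?thesis using that by blast
qed

lemma card_PC: "card PC0 = 2" "card PC1 = 6" "card PC2 = 6" "card PC3 = 1" "card GC = 3"
  by (simp_all add: PC0_def PC1_def PC2_def PC3_def GC_def)

lemma GC_sub: "GC \<subseteq> PC1" by (simp add: GC_def PC1_def)

lemma card_plane_img: "card (plane ` (S::(bit^4) set)) = card S"
  by (rule card_image, rule inj_on_subset[OF plane_inj], simp)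

definition TP :: "(bit^4) set" where "TP = {V4 0 1 0 0, V4 1 1 0 0, V4 0 0 1 0, V4 0 0 1 1, V4 1 0 1 0, V4 0 1 0 1}"
definition MG0 :: "(bit^4) set" where "MG0 = {V4 1 1 0 1, V4 1 0 1 1}"
definition MG1 :: "(bit^4) set" where "MG1 = {V4 1 0 0 1, V4 0 1 1 1, V4 1 1 1 0}"
definition MG3 :: "(bit^4) set" where "MG3 = {V4 0 1 1 0}"

lemma ex_opt: "(\<exists>t::bit option. P t) \<longleftrightarrow> P None \<or> P (Some 0) \<or> P (Some 1)"
proof
  assume "\<exists>t. P t"
  then obtain t where "P t" by blast
  then show "P None \<or> P (Some 0) \<or> P (Some 1)"
  proof (cases t)
    case (Some a)
    then show ?thesis using \<open>P t\<close> by (cases a) auto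
  qed auto
qed blast

lemma filter_insert [simp]: "{c \<in> insert a A. P c} = (if P a then insert a {c \<in> A. P c} else {c \<in> A. P c})"
  by auto

lemma ex_tangent: "(\<exists>t. {x} \<in> tangent t) \<longleftrightarrow> x \<noteq> 0 \<and> x \<in> TV"
proof -
  have "(\<exists>t. {x} \<in> tangent t) \<longleftrightarrow> {x} \<in> tangent None \<or> {x} \<in> tangent (Some 0) \<or> {x} \<in> tangent (Some 1)"
    by (rule ex_opt)
  also have "\<dots> \<longleftrightarrow> x \<noteq> 0 \<and> x \<in> TV"
    unfolding tangent_vals TV_def by auto
  finally show ?thesis .
qed

lemma sng_in_Cub: "{x} \<in> Cub \<longleftrightarrow> x \<in> CV"
  unfolding Cub_bit by auto

lemma cnt_Gamma: "card {\<pi> \<in> Gamma_planes. {x} \<in> \<pi>} = card {c \<in> GC. x \<noteq> 0 \<and> pdot c x = 0}"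
proof -
  have "{\<pi> \<in> Gamma_planes. {x} \<in> \<pi>} = plane ` {c \<in> GC. x \<noteq> 0 \<and> pdot c x = 0}"
    unfolding Gamma_bit plane_bit Zs_def by auto
  then show ?thesis by (simp add: card_plane_img)
qed

lemma sngs_filter: "{P \<in> sngs S. Q P} = sngs {x \<in> S. Q {x}}" by auto

lemma T_bit: "(T_points :: bit pt set) = sngs TP"
proof -
  have "(T_points :: bit pt set) = sngs {x. x \<noteq> 0 \<and> x \<notin> CV \<and> x \<noteq> 0 \<and> x \<in> TV}"
    unfolding T_points_def points_bit sngs_filter sng_in_Cub ex_tangent by simp
  also have "{x. x \<noteq> 0 \<and> x \<notin> CV \<and> x \<noteq> 0 \<and> x \<in> TV} = TP"
    by (simp add: set_eq_iff forall_vec4 forall_bit zero_V4 CV_def TV_def TP_def)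
  finally show ?thesis .
qed

lemma muG_bit: "(muGamma_points mu :: bit pt set) = sngs {x. x \<noteq> 0 \<and> x \<notin> CV \<and> x \<notin> TV \<and> card {c \<in> GC. pdot c x = 0} = mu}"
proof -
  have e: "(\<forall>t. {x} \<notin> tangent t) \<longleftrightarrow> \<not> (x \<noteq> 0 \<and> x \<in> TV)" for x :: "bit^4"
    using ex_tangent[of x] by blast
  show ?thesis
    unfolding muGamma_points_def points_bit sngs_filter sng_in_Cub e cnt_Gamma
    by (rule arg_cong[where f=sngs]) auto
qed

lemma filter_empty: "{c \<in> {}. P c} = {}" by simp

lemma card_GC_filter: "card {c \<in> GC. P c} = (if P (V4 0 0 0 1) then 1 else 0) + (if P (V4 1 0 0 0) then 1 else 0) + (if P (V4 1 1 1 1) then (1::nat) else 0)"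
  unfolding GC_def filter_insert filter_empty by simp

lemma MG0_eq: "{x. x \<noteq> 0 \<and> x \<notin> CV \<and> x \<notin> TV \<and> card {c \<in> GC. pdot c x = 0} = 0} = MG0"
  by (simp add: set_eq_iff forall_vec4 forall_bit zero_V4 CV_def TV_def card_GC_filter MG0_def)
lemma MG1_eq: "{x. x \<noteq> 0 \<and> x \<notin> CV \<and> x \<notin> TV \<and> card {c \<in> GC. pdot c x = 0} = 1} = MG1"
  by (simp add: set_eq_iff forall_vec4 forall_bit zero_V4 CV_def TV_def card_GC_filter MG1_def)
lemma MG3_eq: "{x. x \<noteq> 0 \<and> x \<notin> CV \<and> x \<notin> TV \<and> card {c \<in> GC. pdot c x = 0} = 3} = MG3"
  by (simp add: set_eq_iff forall_vec4 forall_bit zero_V4 CV_def TV_def card_GC_filter MG3_def)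


lemma proj_pt_comp: "proj_pt (A ** B) P = proj_pt B (proj_pt A P)"
  unfolding proj_pt_def image_image vector_matrix_mul_assoc ..

lemma proj_pt_id: "proj_pt (mat 1) P = (P :: ('a::field^4) set)"
  unfolding proj_pt_def by simp

lemma proj_plane_comp: "proj_plane (A ** B) \<pi> = proj_plane B (proj_plane A \<pi>)"
  unfolding proj_plane_def image_image proj_pt_comp ..

lemma proj_plane_id: "proj_plane (mat 1) \<pi> = (\<pi> :: ('a::field^4) set set)"
  unfolding proj_plane_def proj_pt_id by simp

lemma Gq_id: "(mat 1 :: 'a::field^4^4) \<in> Gq"
  unfolding Gq_def invertible_def by (auto simp: proj_pt_id matrix_mul_lid)

lemma Gq_mult: "A \<in> Gq \<Longrightarrow> B \<in> Gq \<Longrightarrow> A ** B \<in> Gq"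
  unfolding Gq_def by (auto simp: invertible_mult proj_pt_comp image_image[symmetric, of "proj_pt B" "proj_pt A"])

lemma Gq_inv: assumes "A \<in> Gq" obtains A' where "A' \<in> Gq" "A ** A' = mat 1" "A' ** A = mat 1"
proof -
  from assms obtain A' where AA': "A ** A' = mat 1" "A' ** A = mat 1" and C: "proj_pt A ` Cub = Cub"
    unfolding Gq_def invertible_def by blast
  have "invertible A'" using AA' unfolding invertible_def by blast
  moreover have "proj_pt A' ` Cub = Cub"
  proof -
    have "proj_pt A' ` Cub = proj_pt A' ` proj_pt A ` Cub" using C by simp
    also have "\<dots> = proj_pt (A ** A') ` Cub" unfolding image_image proj_pt_comp ..
    also have "\<dots> = Cub" unfolding AA' proj_pt_id by simp
    finally show ?thesis .
  qed
  ultimately show ?thesis using that AA' unfolding Gq_def by blast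
qed

definition orbP :: "'a::field pt \<Rightarrow> 'a pt set" where "orbP P = {proj_pt A P | A. A \<in> Gq}"
definition orbL :: "'a::field pt set \<Rightarrow> 'a pt set set" where "orbL \<pi> = {proj_plane A \<pi> | A. A \<in> Gq}"

lemma orbP_move: assumes "B \<in> Gq" shows "orbP (proj_pt B P) = orbP (P :: ('a::field^4) set)"
proof -
  obtain B' where B': "B' \<in> Gq" "B ** B' = mat 1" "B' ** B = mat 1" using Gq_inv[OF assms] by blast
  show ?thesis unfolding orbP_def
  proof (intro equalityI subsetI)
    fix Q assume "Q \<in> {proj_pt A (proj_pt B P) |A. A \<in> Gq}"
    then obtain A where "A \<in> Gq" "Q = proj_pt A (proj_pt B P)" by blast
    then show "Q \<in> {proj_pt A P |A. A \<in> Gq}" using Gq_mult[OF assms] by (metis (mono_tags, lifting) mem_Collect_eq proj_pt_comp)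
  next
    fix Q assume "Q \<in> {proj_pt A P |A. A \<in> Gq}"
    then obtain A where A: "A \<in> Gq" "Q = proj_pt A P" by blast
    have "proj_pt (B' ** A) (proj_pt B P) = Q"
      unfolding proj_pt_comp A(2) by (metis B'(2) proj_pt_comp proj_pt_id)
    then show "Q \<in> {proj_pt A (proj_pt B P) |A. A \<in> Gq}" using Gq_mult[OF B'(1) A(1)] by blast
  qed
qed

lemma orbL_move: assumes "B \<in> Gq" shows "orbL (proj_plane B \<pi>) = orbL (\<pi> :: ('a::field^4) set set)"
proof -
  obtain B' where B': "B' \<in> Gq" "B ** B' = mat 1" "B' ** B = mat 1" using Gq_inv[OF assms] by blast
  show ?thesis unfolding orbL_def
  proof (intro equalityI subsetI)
    fix Q assume "Q \<in> {proj_plane A (proj_plane B \<pi>) |A. A \<in> Gq}"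
    then obtain A where "A \<in> Gq" "Q = proj_plane A (proj_plane B \<pi>)" by blast
    then show "Q \<in> {proj_plane A \<pi> |A. A \<in> Gq}" using Gq_mult[OF assms] by (metis (mono_tags, lifting) mem_Collect_eq proj_plane_comp)
  next
    fix Q assume "Q \<in> {proj_plane A \<pi> |A. A \<in> Gq}"
    then obtain A where A: "A \<in> Gq" "Q = proj_plane A \<pi>" by blast
    have "proj_plane (B' ** A) (proj_plane B \<pi>) = Q"
      unfolding proj_plane_comp A(2) by (metis B'(2) proj_plane_comp proj_plane_id)
    then show "Q \<in> {proj_plane A (proj_plane B \<pi>) |A. A \<in> Gq}" using Gq_mult[OF B'(1) A(1)] by blast
  qed
qed

lemma orbP_self: "P \<in> orbP (P :: ('a::field^4) set)"
  unfolding orbP_def using Gq_id proj_pt_id by (metis (mono_tags, lifting) mem_Collect_eq)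

lemma orbL_self: "\<pi> \<in> orbL (\<pi> :: ('a::field^4) set set)"
  unfolding orbL_def using Gq_id proj_plane_id by (metis (mono_tags, lifting) mem_Collect_eq)

lemma orbP_step: "Q \<in> orbP P \<Longrightarrow> g \<in> Gq \<Longrightarrow> proj_pt g Q \<in> orbP P"
  unfolding orbP_def by (auto simp flip: proj_pt_comp intro: Gq_mult)

lemma orbL_step: "\<sigma> \<in> orbL \<pi> \<Longrightarrow> g \<in> Gq \<Longrightarrow> proj_plane g \<sigma> \<in> orbL \<pi>"
  unfolding orbL_def by (auto simp flip: proj_plane_comp intro: Gq_mult)

lemma pdot_vm: "pdot c (y v* B) = pdot (B *v c) (y :: 'a::field^4)"
  unfolding pdot_def vector_matrix_mult_def matrix_vector_mult_def
  by (simp add: sum_distrib_left sum_distrib_right mult.assoc mult.left_commute mult.commute) (rule sum.swap)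

lemma proj_pt_sng: "proj_pt A {x} = {x v* A}"
  unfolding proj_pt_def by simp

lemma proj_plane_bit: assumes "A ** A' = mat 1" "A' ** A = mat 1"
  shows "proj_plane A (plane c) = plane (A' *v (c::bit^4))"
proof -
  have "(\<lambda>x. x v* A) ` Zs c = Zs (A' *v c)"
  proof (intro equalityI subsetI)
    fix y assume "y \<in> (\<lambda>x. x v* A) ` Zs c"
    then obtain x where x: "x \<noteq> 0" "pdot c x = 0" "y = x v* A" unfolding Zs_def by blast
    have yx: "y v* A' = x" unfolding x(3) vector_matrix_mul_assoc assms by simp
    have "y \<noteq> 0" using x(1) yx by force
    moreover have "pdot (A' *v c) y = 0" using x(2) yx by (simp only: pdot_vm[symmetric])
    ultimately show "y \<in> Zs (A' *v c)" unfolding Zs_def by blast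
  next
    fix y assume "y \<in> Zs (A' *v c)"
    then have y: "y \<noteq> 0" "pdot (A' *v c) y = 0" unfolding Zs_def by auto
    have e: "(y v* A') v* A = y" unfolding vector_matrix_mul_assoc assms by simp
    have "y v* A' \<noteq> 0" using y(1) e by force
    moreover have "pdot c (y v* A') = 0" using y(2) by (simp only: pdot_vm)
    ultimately have "y v* A' \<in> Zs c" unfolding Zs_def by blast
    then show "y \<in> (\<lambda>x. x v* A) ` Zs c" using e by (metis imageI)
  qed
  have "proj_plane A (plane c) = (\<lambda>x. proj_pt A {x}) ` Zs c"
    unfolding proj_plane_def plane_bit image_image ..
  also have "\<dots> = sngs ((\<lambda>x. x v* A) ` Zs c)"
    unfolding proj_pt_sng image_image ..
  also have "\<dots> = plane (A' *v c)" unfolding \<open>(\<lambda>x. x v* A) ` Zs c = Zs (A' *v c)\<close> plane_bit ..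
  finally show ?thesis .
qed

lemma proj_pt_inj: assumes "A ** A' = mat 1" shows "inj (proj_pt (A :: 'a::field^4^4))"
proof (rule inj_on_inverseI[of _ "proj_pt A'"])
  fix P show "proj_pt A' (proj_pt A P) = P"
    unfolding proj_pt_comp[symmetric] assms proj_pt_id ..
qed

section \<open>Invariance\<close>

lemma Gq_f: assumes "A \<in> Gq"
  shows "inj (\<lambda>x::bit^4. x v* A)" "(\<lambda>x. x v* A) ` CV = CV"
proof -
  obtain A' where A': "A' \<in> Gq" "A ** A' = mat 1" "A' ** A = mat 1" using Gq_inv[OF assms] by blast
  show "inj (\<lambda>x::bit^4. x v* A)"
    by (rule inj_on_inverseI[of _ "\<lambda>x. x v* A'"]) (simp add: vector_matrix_mul_assoc A')
  have "proj_pt A ` Cub = Cub" using assms unfolding Gq_def by blast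
  then have "sngs ((\<lambda>x. x v* A) ` CV) = sngs CV" unfolding Cub_bit image_image proj_pt_sng .
  then show "(\<lambda>x. x v* A) ` CV = CV" using inj_sng by (simp add: inj_image_eq_iff)
qed

definition SP :: "(bit^4) set" where
  "SP = {V4 0 0 0 0, V4 1 0 0 0, V4 0 0 0 1, V4 1 1 1 1, V4 1 0 0 1, V4 0 1 1 1, V4 1 1 1 0, V4 0 1 1 0}"

lemma bit4_two [simp]: "(2::bit^4) = 0"
  by (simp add: vec_eq_iff)

lemma V4_mult [simp]: "vector [a,b,c,d] * vector [a',b',c',d'] = (vector [a*a',b*b',c*c',d*d'] :: bit^4)"
  by (simp add: vec_eq_iff forall_4)

definition w1 :: "bit^4" where "w1 = V4 1 0 0 0"
definition w2 :: "bit^4" where "w2 = V4 0 0 0 1"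
definition w3 :: "bit^4" where "w3 = V4 1 1 1 1"

lemma CV_w: "CV = {w1, w2, w3}" unfolding CV_def w1_def w2_def w3_def ..
lemma SP_w: "SP = {0, w1, w2, w3, w1 + w2, w1 + w3, w2 + w3, w1 + w2 + w3}"
  unfolding SP_def w1_def w2_def w3_def by (simp add: zero_V4)
lemma MG1_w: "MG1 = {w1 + w2, w1 + w3, w2 + w3}"
  unfolding MG1_def w1_def w2_def w3_def by simp
lemma MG3_w: "MG3 = {w1 + w2 + w3}"
  unfolding MG3_def w1_def w2_def w3_def by simp
lemma w_distinct: "w1 \<noteq> w2" "w1 \<noteq> w3" "w2 \<noteq> w3"
  unfolding w1_def w2_def w3_def by simp_all

lemma SP_closed: "\<forall>a\<in>CV. \<forall>b\<in>CV. a + b \<in> SP" "\<forall>a\<in>CV. \<forall>b\<in>CV. \<forall>c\<in>CV. a + b + c \<in> SP" "CV \<subseteq> SP" "0 \<in> SP"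
  unfolding SP_def CV_def by (simp_all add: zero_V4)

lemma SP_inv: assumes "A \<in> Gq" "x \<in> SP" shows "x v* A \<in> SP"
proof -
  have C: "a \<in> CV \<Longrightarrow> a v* A \<in> CV" for a using Gq_f(2)[OF assms(1)] by blast
  have m: "w1 \<in> CV" "w2 \<in> CV" "w3 \<in> CV" unfolding CV_w by simp_all
  note c = C[OF m(1)] C[OF m(2)] C[OF m(3)]
  have s2: "a \<in> CV \<Longrightarrow> b \<in> CV \<Longrightarrow> a + b \<in> SP" for a b using SP_closed(1) by blast
  have s3: "a \<in> CV \<Longrightarrow> b \<in> CV \<Longrightarrow> d \<in> CV \<Longrightarrow> a + b + d \<in> SP" for a b d using SP_closed(2) by blast
  have s1: "a \<in> CV \<Longrightarrow> a \<in> SP" for a using SP_closed(3) by blast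
  have "x = 0 \<or> x = w1 \<or> x = w2 \<or> x = w3 \<or> x = w1 + w2 \<or> x = w1 + w3 \<or> x = w2 + w3 \<or> x = w1 + w2 + w3"
    using assms(2) unfolding SP_w by blast
  then show ?thesis
    by (elim disjE; simp only: vector_matrix_left_distrib vector_matrix_mult_0; blast intro: s1 s2 s3 c SP_closed(4))
qed

lemma K2_eq: "{x. x \<notin> SP} = TP \<union> MG0"
  by (simp add: set_eq_iff forall_vec4 forall_bit SP_def TP_def MG0_def)

lemma K2_inv: assumes "A \<in> Gq" "x \<notin> SP" shows "x v* A \<notin> SP"
proof
  let ?f = "\<lambda>x::bit^4. x v* A"
  assume xs: "x v* A \<in> SP"
  have sub: "?f ` SP \<subseteq> SP" using SP_inv[OF assms(1)] by blast
  have fin: "finite SP" unfolding SP_def by simp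
  have inj: "inj_on ?f SP" using Gq_f(1)[OF assms(1)] unfolding inj_on_def inj_def by blast
  have "?f ` SP = SP" by (rule endo_inj_surj[OF fin sub inj])
  then have "?f x \<in> ?f ` SP" using xs by simp
  then obtain y where y: "y \<in> SP" "?f x = ?f y" by (auto simp del: vector_4)
  then have "y = x" using Gq_f(1)[OF assms(1)] unfolding inj_def by metis
  then show False using assms(2) y(1) by simp
qed

lemma MG1_closed: "\<forall>a\<in>CV. \<forall>b\<in>CV. a \<noteq> b \<longrightarrow> a + b \<in> MG1"
  unfolding MG1_def CV_def by simp

lemma MG1_inv: assumes "A \<in> Gq" "x \<in> MG1" shows "x v* A \<in> MG1"
proof -
  have C: "a \<in> CV \<Longrightarrow> a v* A \<in> CV" for a using Gq_f(2)[OF assms(1)] by blast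
  have I: "a v* A = b v* A \<longleftrightarrow> a = b" for a b using Gq_f(1)[OF assms(1)] unfolding inj_def by blast
  have m: "w1 \<in> CV" "w2 \<in> CV" "w3 \<in> CV" unfolding CV_w by simp_all
  note c = C[OF m(1)] C[OF m(2)] C[OF m(3)]
  have d: "w1 v* A \<noteq> w2 v* A" "w1 v* A \<noteq> w3 v* A" "w2 v* A \<noteq> w3 v* A"
    unfolding I using w_distinct by simp_all
  have s2: "a \<in> CV \<Longrightarrow> b \<in> CV \<Longrightarrow> a \<noteq> b \<Longrightarrow> a + b \<in> MG1" for a b using MG1_closed by blast
  have r1: "(w1 + w2) v* A \<in> MG1" unfolding vector_matrix_left_distrib by (rule s2[OF c(1) c(2) d(1)])
  have r2: "(w1 + w3) v* A \<in> MG1" unfolding vector_matrix_left_distrib by (rule s2[OF c(1) c(3) d(2)])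
  have r3: "(w2 + w3) v* A \<in> MG1" unfolding vector_matrix_left_distrib by (rule s2[OF c(2) c(3) d(3)])
  have "x = w1 + w2 \<or> x = w1 + w3 \<or> x = w2 + w3"
    using assms(2) unfolding MG1_w by blast
  then show ?thesis using r1 r2 r3 by (elim disjE) simp_all
qed

lemma MG3_closed: "\<forall>a\<in>CV. \<forall>b\<in>CV. \<forall>c\<in>CV. a \<noteq> b \<and> a \<noteq> c \<and> b \<noteq> c \<longrightarrow> a + b + c \<in> MG3"
  unfolding MG3_def CV_def by simp

lemma MG3_inv: assumes "A \<in> Gq" "x \<in> MG3" shows "x v* A \<in> MG3"
proof -
  have C: "a \<in> CV \<Longrightarrow> a v* A \<in> CV" for a using Gq_f(2)[OF assms(1)] by blast
  have I: "a v* A = b v* A \<longleftrightarrow> a = b" for a b using Gq_f(1)[OF assms(1)] unfolding inj_def by blast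
  have m: "w1 \<in> CV" "w2 \<in> CV" "w3 \<in> CV" unfolding CV_w by simp_all
  note c = C[OF m(1)] C[OF m(2)] C[OF m(3)]
  have d: "w1 v* A \<noteq> w2 v* A" "w1 v* A \<noteq> w3 v* A" "w2 v* A \<noteq> w3 v* A"
    unfolding I using w_distinct by simp_all
  have s3: "a + b + e \<in> MG3" if "a \<in> CV" "b \<in> CV" "e \<in> CV" "a \<noteq> b" "a \<noteq> e" "b \<noteq> e" for a b e
    using MG3_closed that by blast
  have x: "x = w1 + w2 + w3" using assms(2) unfolding MG3_w by simp
  show ?thesis unfolding x vector_matrix_left_distrib by (rule s3[OF c(1) c(2) c(3) d(1) d(2) d(3)])
qed

lemma CV_inv: assumes "A \<in> Gq" "x \<in> CV" shows "x v* A \<in> CV"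
  using Gq_f(2)[OF assms(1)] assms(2) by blast

lemma K2_inv': assumes "A \<in> Gq" "x \<in> TP \<union> MG0" shows "x v* A \<in> TP \<union> MG0"
  using K2_inv[OF assms(1)] assms(2) K2_eq by blast

lemma nonzero_cases: "(x::bit^4) \<noteq> 0 \<Longrightarrow> x \<in> CV \<or> x \<in> TP \<union> MG0 \<or> x \<in> MG3 \<or> x \<in> MG1"
proof -
  have "\<forall>x::bit^4. x \<noteq> 0 \<longrightarrow> x \<in> CV \<or> x \<in> TP \<union> MG0 \<or> x \<in> MG3 \<or> x \<in> MG1"
    by (simp add: forall_vec4 forall_bit zero_V4 CV_def TP_def MG0_def MG3_def MG1_def)
  then show "x \<noteq> 0 \<Longrightarrow> ?thesis" by blast
qed

lemma plane_inv: assumes "A \<in> Gq" "\<pi> \<in> planes"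
  shows "proj_plane A \<pi> \<in> planes" "card (proj_plane A \<pi> \<inter> Cub) = card (\<pi> \<inter> (Cub :: bit pt set))"
proof -
  obtain A' where A': "A' \<in> Gq" "A ** A' = mat 1" "A' ** A = mat 1" using Gq_inv[OF assms(1)] by blast
  obtain c where c: "c \<noteq> 0" "\<pi> = plane c" using assms(2) unfolding planes_bit by blast
  have "A *v (A' *v c) = c" by (simp add: matrix_vector_mul_assoc A')
  then have "A' *v c \<noteq> 0" using c(1) by (metis matrix_vector_mult_0_right)
  then show "proj_plane A \<pi> \<in> planes" unfolding c(2) proj_plane_bit[OF A'(2,3)] planes_bit by blast
  have C: "proj_pt A ` Cub = Cub" using assms(1) unfolding Gq_def by blast
  have "proj_plane A \<pi> \<inter> Cub = proj_pt A ` (\<pi> \<inter> Cub)"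
    unfolding proj_plane_def image_Int[OF proj_pt_inj[OF A'(2)]] C ..
  then show "card (proj_plane A \<pi> \<inter> Cub) = card (\<pi> \<inter> (Cub :: bit pt set))"
    by (simp add: card_image inj_on_subset[OF proj_pt_inj[OF A'(2)]])
qed



section \<open>Generators\<close>

definition g1 :: "bit^4^4" where "g1 = vector [V4 0 0 0 1, V4 0 0 1 0, V4 0 1 0 0, V4 1 0 0 0]"
definition g2 :: "bit^4^4" where "g2 = vector [V4 0 0 0 1, V4 1 0 1 1, V4 1 1 0 1, V4 1 0 0 0]"
definition g3 :: "bit^4^4" where "g3 = vector [V4 1 0 0 0, V4 0 1 0 0, V4 0 0 1 0, V4 1 1 1 1]"

lemma mm_V4: "(vector [r1,r2,r3,r4] :: 'a::field^4^4) ** B = vector [r1 v* B, r2 v* B, r3 v* B, r4 v* B]"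
  by (simp add: vec_eq_iff forall_4 matrix_matrix_mult_def vector_matrix_mult_def mult.commute)

lemma mat1_V4: "(mat 1 :: bit^4^4) = vector [V4 1 0 0 0, V4 0 1 0 0, V4 0 0 1 0, V4 0 0 0 1]"
  by (simp add: vec_eq_iff forall_4 mat_def)

lemma gen_Gq: assumes "A ** A = mat 1" "(\<lambda>x. x v* A) ` CV = CV" shows "A \<in> Gq"
proof -
  have "invertible A" using assms(1) unfolding invertible_def by blast
  moreover have "proj_pt A ` Cub = sngs ((\<lambda>x. x v* A) ` CV)"
    unfolding Cub_bit image_image proj_pt_sng ..
  then have "proj_pt A ` Cub = Cub" unfolding assms(2) Cub_bit .
  ultimately show ?thesis unfolding Gq_def by blast
qed

lemma g_inv: "g1 ** g1 = mat 1" "g2 ** g2 = mat 1" "g3 ** g3 = mat 1"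
  by (simp_all add: g1_def g2_def g3_def mm_V4 vm_V4 mat1_V4)

lemma g_CV: "(\<lambda>x. x v* g1) ` CV = CV" "(\<lambda>x. x v* g2) ` CV = CV" "(\<lambda>x. x v* g3) ` CV = CV"
  unfolding CV_def by (auto simp: g1_def g2_def g3_def vm_V4)

lemma g_Gq: "g1 \<in> Gq" "g2 \<in> Gq" "g3 \<in> Gq"
  using gen_Gq g_inv g_CV by blast+

lemma stepL: assumes "plane (c::bit^4) \<in> orbL \<pi>" "g \<in> Gq" "g ** g = mat 1" shows "plane (g *v c) \<in> orbL \<pi>"
proof -
  have "proj_plane g (plane c) \<in> orbL \<pi>" by (rule orbL_step[OF assms(1,2)])
  then show ?thesis unfolding proj_plane_bit[OF assms(3) assms(3)] .
qed

lemma stepP: assumes "{x} \<in> orbP P" "g \<in> Gq" shows "{x v* g} \<in> orbP P"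
proof -
  have "proj_pt g {x} \<in> orbP P" by (rule orbP_step[OF assms(1,2)])
  then show ?thesis unfolding proj_pt_sng .
qed

lemma orbL_class: assumes "c0 \<in> S" "S = {c. c \<noteq> 0 \<and> card (Zs c \<inter> CV) = d}" "plane ` S \<subseteq> orbL (plane c0)"
  shows "orbL (plane c0) = plane ` S"
proof
  show "orbL (plane c0) \<subseteq> plane ` S"
  proof
    fix Q assume "Q \<in> orbL (plane c0)"
    then obtain A where A: "A \<in> Gq" "Q = proj_plane A (plane c0)" unfolding orbL_def by blast
    have c0: "c0 \<noteq> 0" "card (Zs c0 \<inter> CV) = d" using assms(1,2) by auto
    then have p0: "plane c0 \<in> planes" unfolding planes_bit by blast
    have "Q \<in> planes" using plane_inv(1)[OF A(1) p0] A(2) by simp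
    then obtain c where c: "c \<noteq> 0" "Q = plane c" unfolding planes_bit by blast
    have "card (Zs c \<inter> CV) = card (plane c \<inter> Cub)" by (simp add: cnt_plane)
    also have "\<dots> = card (plane c0 \<inter> Cub)" using plane_inv(2)[OF A(1) p0] A(2) c(2) by simp
    also have "\<dots> = d" using c0(2) by (simp add: cnt_plane)
    finally have "card (Zs c \<inter> CV) = d" .
    then show "Q \<in> plane ` S" using c assms(2) by blast
  qed
qed (rule assms(3))

lemma orbL_all: assumes "orbL (plane c0) = plane ` S" "\<pi> \<in> plane ` S" shows "orbL \<pi> = plane ` S"
proof -
  obtain B where "B \<in> Gq" "\<pi> = proj_plane B (plane c0)" using assms unfolding orbL_def by blast
  then show ?thesis using orbL_move[OF \<open>B \<in> Gq\<close>, of "plane c0"] assms(1) by simp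
qed

lemma orbP_class: assumes "x0 \<in> K" "\<And>A x. A \<in> Gq \<Longrightarrow> x \<in> K \<Longrightarrow> x v* A \<in> K" "sngs K \<subseteq> orbP {x0}"
  shows "orbP {x0} = sngs K"
proof
  show "orbP {x0} \<subseteq> sngs K"
  proof
    fix Q assume "Q \<in> orbP {x0}"
    then obtain A where A: "A \<in> Gq" "Q = proj_pt A {x0}" unfolding orbP_def by blast
    then show "Q \<in> sngs K" using assms(1,2) unfolding proj_pt_sng by blast
  qed
qed (rule assms(3))

lemma orbP_all: assumes "orbP {x0} = sngs K" "P \<in> sngs K" shows "orbP P = sngs K"
proof -
  obtain B where "B \<in> Gq" "P = proj_pt B {x0}" using assms unfolding orbP_def by blast
  then show ?thesis using orbP_move[OF \<open>B \<in> Gq\<close>, of "{x0}"] assms(1) by simp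
qed

section \<open>Orbits\<close>

lemma OL_PC0: "orbL (plane (V4 1 0 1 1)) = plane ` PC0"
proof (rule orbL_class[where d=0])
  let ?O = "orbL (plane (V4 1 0 1 1))"
  have p1011: "plane (V4 1 0 1 1) \<in> ?O" by (rule orbL_self)
  have p1101: "plane (V4 1 1 0 1) \<in> ?O" using stepL[OF p1011 g_Gq(1) g_inv(1)] by (simp add: g1_def mv_V4)
  show "plane ` PC0 \<subseteq> ?O" unfolding PC0_def using p1011 p1101 by simp
qed (simp add: PC0_def, rule PC0_eq[symmetric])

lemma OL_PC1: "orbL (plane (V4 1 0 0 0)) = plane ` PC1"
proof (rule orbL_class[where d=1])
  let ?O = "orbL (plane (V4 1 0 0 0))"
  have p1000: "plane (V4 1 0 0 0) \<in> ?O" by (rule orbL_self)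
  have p0001: "plane (V4 0 0 0 1) \<in> ?O" using stepL[OF p1000 g_Gq(1) g_inv(1)] by (simp add: g1_def mv_V4)
  have p0111: "plane (V4 0 1 1 1) \<in> ?O" using stepL[OF p1000 g_Gq(2) g_inv(2)] by (simp add: g2_def mv_V4)
  have p1001: "plane (V4 1 0 0 1) \<in> ?O" using stepL[OF p1000 g_Gq(3) g_inv(3)] by (simp add: g3_def mv_V4)
  have p1110: "plane (V4 1 1 1 0) \<in> ?O" using stepL[OF p0001 g_Gq(2) g_inv(2)] by (simp add: g2_def mv_V4)
  have p1111: "plane (V4 1 1 1 1) \<in> ?O" using stepL[OF p1110 g_Gq(3) g_inv(3)] by (simp add: g3_def mv_V4)
  show "plane ` PC1 \<subseteq> ?O" unfolding PC1_def using p1000 p0001 p0111 p1001 p1110 p1111 by simp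
qed (simp add: PC1_def, rule PC1_eq[symmetric])

lemma OL_PC2: "orbL (plane (V4 0 0 1 0)) = plane ` PC2"
proof (rule orbL_class[where d=2])
  let ?O = "orbL (plane (V4 0 0 1 0))"
  have p0010: "plane (V4 0 0 1 0) \<in> ?O" by (rule orbL_self)
  have p0100: "plane (V4 0 1 0 0) \<in> ?O" using stepL[OF p0010 g_Gq(1) g_inv(1)] by (simp add: g1_def mv_V4)
  have p0011: "plane (V4 0 0 1 1) \<in> ?O" using stepL[OF p0010 g_Gq(3) g_inv(3)] by (simp add: g3_def mv_V4)
  have p0101: "plane (V4 0 1 0 1) \<in> ?O" using stepL[OF p0100 g_Gq(3) g_inv(3)] by (simp add: g3_def mv_V4)
  have p1100: "plane (V4 1 1 0 0) \<in> ?O" using stepL[OF p0011 g_Gq(1) g_inv(1)] by (simp add: g1_def mv_V4)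
  have p1010: "plane (V4 1 0 1 0) \<in> ?O" using stepL[OF p0011 g_Gq(2) g_inv(2)] by (simp add: g2_def mv_V4)
  show "plane ` PC2 \<subseteq> ?O" unfolding PC2_def using p0010 p0100 p0011 p0101 p1100 p1010 by simp
qed (simp add: PC2_def, rule PC2_eq[symmetric])

lemma OL_PC3: "orbL (plane (V4 0 1 1 0)) = plane ` PC3"
proof (rule orbL_class[where d=3])
  let ?O = "orbL (plane (V4 0 1 1 0))"
  have p0110: "plane (V4 0 1 1 0) \<in> ?O" by (rule orbL_self)
  show "plane ` PC3 \<subseteq> ?O" unfolding PC3_def using p0110 by simp
qed (simp add: PC3_def, rule PC3_eq[symmetric])

lemma OP_CV: "orbP {V4 1 0 0 0} = sngs (CV)"
proof (rule orbP_class[OF _ CV_inv])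
  let ?O = "orbP {V4 1 0 0 0}"
  have p1000: "{V4 1 0 0 0} \<in> ?O" by (rule orbP_self)
  have p0001: "{V4 0 0 0 1} \<in> ?O" using stepP[OF p1000 g_Gq(1)] by (simp add: g1_def vm_V4)
  have p1111: "{V4 1 1 1 1} \<in> ?O" using stepP[OF p0001 g_Gq(3)] by (simp add: g3_def vm_V4)
  show "sngs (CV) \<subseteq> ?O" unfolding CV_def using p1000 p0001 p1111 by simp
qed (simp add: CV_def)

lemma OP_K2: "orbP {V4 0 1 0 0} = sngs (TP \<union> MG0)"
proof (rule orbP_class[OF _ K2_inv'])
  let ?O = "orbP {V4 0 1 0 0}"
  have p0100: "{V4 0 1 0 0} \<in> ?O" by (rule orbP_self)
  have p0010: "{V4 0 0 1 0} \<in> ?O" using stepP[OF p0100 g_Gq(1)] by (simp add: g1_def vm_V4)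
  have p1011: "{V4 1 0 1 1} \<in> ?O" using stepP[OF p0100 g_Gq(2)] by (simp add: g2_def vm_V4)
  have p1101: "{V4 1 1 0 1} \<in> ?O" using stepP[OF p0010 g_Gq(2)] by (simp add: g2_def vm_V4)
  have p0101: "{V4 0 1 0 1} \<in> ?O" using stepP[OF p1011 g_Gq(3)] by (simp add: g3_def vm_V4)
  have p0011: "{V4 0 0 1 1} \<in> ?O" using stepP[OF p1101 g_Gq(3)] by (simp add: g3_def vm_V4)
  have p1010: "{V4 1 0 1 0} \<in> ?O" using stepP[OF p0101 g_Gq(1)] by (simp add: g1_def vm_V4)
  have p1100: "{V4 1 1 0 0} \<in> ?O" using stepP[OF p0011 g_Gq(1)] by (simp add: g1_def vm_V4)
  show "sngs (TP \<union> MG0) \<subseteq> ?O" unfolding TP_def MG0_def using p0100 p0010 p1011 p1101 p0101 p0011 p1010 p1100 by simp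
qed (simp add: TP_def MG0_def)

lemma OP_MG3: "orbP {V4 0 1 1 0} = sngs (MG3)"
proof (rule orbP_class[OF _ MG3_inv])
  let ?O = "orbP {V4 0 1 1 0}"
  have p0110: "{V4 0 1 1 0} \<in> ?O" by (rule orbP_self)
  show "sngs (MG3) \<subseteq> ?O" unfolding MG3_def using p0110 by simp
qed (simp add: MG3_def)

lemma OP_MG1: "orbP {V4 1 0 0 1} = sngs (MG1)"
proof (rule orbP_class[OF _ MG1_inv])
  let ?O = "orbP {V4 1 0 0 1}"
  have p1001: "{V4 1 0 0 1} \<in> ?O" by (rule orbP_self)
  have p0111: "{V4 0 1 1 1} \<in> ?O" using stepP[OF p1001 g_Gq(3)] by (simp add: g3_def vm_V4)
  have p1110: "{V4 1 1 1 0} \<in> ?O" using stepP[OF p0111 g_Gq(1)] by (simp add: g1_def vm_V4)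
  show "sngs (MG1) \<subseteq> ?O" unfolding MG1_def using p1001 p0111 p1110 by simp
qed (simp add: MG1_def)


lemma plane_mem: "plane c \<in> plane ` S \<longleftrightarrow> (c::bit^4) \<in> S"
  using plane_inj by (simp add: inj_image_mem_iff)

lemma sng_mem: "{x} \<in> sngs S \<longleftrightarrow> x \<in> S" by auto

lemma plane_orbits_bit: "(plane_orbits :: bit pt set set set) = {plane ` PC1, plane ` PC2, plane ` PC3, plane ` PC0}"
proof -
  have po: "(plane_orbits :: bit pt set set set) = {orbL \<pi> | \<pi>. \<pi> \<in> planes}"
    unfolding plane_orbits_def orbL_def ..
  have A: "orbL \<pi> \<in> {plane ` PC1, plane ` PC2, plane ` PC3, plane ` PC0}" if "\<pi> \<in> planes" for \<pi> :: "bit pt set"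
  proof -
    from that obtain c where c: "c \<in> {c. c \<noteq> 0}" "\<pi> = plane c" unfolding planes_bit by (rule imageE)
    have "c \<noteq> 0" using c(1) by simp
    from PC_all[OF this] show ?thesis
    proof (elim disjE)
      assume "c \<in> PC0" then have "\<pi> \<in> plane ` PC0" unfolding c(2) by (rule imageI)
      then show ?thesis using orbL_all[OF OL_PC0, of \<pi>] by simp
    next
      assume "c \<in> PC1" then have "\<pi> \<in> plane ` PC1" unfolding c(2) by (rule imageI)
      then show ?thesis using orbL_all[OF OL_PC1, of \<pi>] by simp
    next
      assume "c \<in> PC2" then have "\<pi> \<in> plane ` PC2" unfolding c(2) by (rule imageI)
      then show ?thesis using orbL_all[OF OL_PC2, of \<pi>] by simp
    next
      assume "c \<in> PC3" then have "\<pi> \<in> plane ` PC3" unfolding c(2) by (rule imageI)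
      then show ?thesis using orbL_all[OF OL_PC3, of \<pi>] by simp
    qed
  qed
  have B: "plane (V4 1 0 0 0) \<in> planes" "plane (V4 0 0 1 0) \<in> planes" "plane (V4 0 1 1 0) \<in> planes"
      "plane (V4 1 0 1 1) \<in> planes"
    unfolding planes_bit by (rule imageI, simp add: zero_V4)+
  show ?thesis unfolding po
  proof (intro equalityI subsetI)
    fix X :: "bit pt set set" assume "X \<in> {orbL \<pi> |\<pi>. \<pi> \<in> planes}"
    then obtain \<pi> where "\<pi> \<in> planes" "X = orbL \<pi>" by blast
    then show "X \<in> {plane ` PC1, plane ` PC2, plane ` PC3, plane ` PC0}" using A by simp
  next
    fix X :: "bit pt set set" assume "X \<in> {plane ` PC1, plane ` PC2, plane ` PC3, plane ` PC0}"
    then have "X = orbL (plane (V4 1 0 0 0)) \<or> X = orbL (plane (V4 0 0 1 0)) \<or> X = orbL (plane (V4 0 1 1 0)) \<or> X = orbL (plane (V4 1 0 1 1))"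
      unfolding OL_PC0 OL_PC1 OL_PC2 OL_PC3 by simp
    then show "X \<in> {orbL \<pi> |\<pi>. \<pi> \<in> planes}" using B by blast
  qed
qed

lemma point_orbits_bit: "(point_orbits :: bit pt set set) = {sngs CV, sngs (TP \<union> MG0), sngs MG3, sngs MG1}"
proof -
  have po: "(point_orbits :: bit pt set set) = {orbP P | P. P \<in> points}"
    unfolding point_orbits_def orbP_def ..
  have A: "orbP P \<in> {sngs CV, sngs (TP \<union> MG0), sngs MG3, sngs MG1}" if "P \<in> points" for P :: "bit pt"
  proof -
    from that obtain x where x: "x \<in> {x. x \<noteq> 0}" "P = {x}" unfolding points_bit by (rule imageE)
    have "x \<noteq> 0" using x(1) by simp
    from nonzero_cases[OF this] show ?thesis
    proof (elim disjE)
      assume "x \<in> CV" then have "P \<in> sngs CV" unfolding x(2) by (rule imageI)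
      then show ?thesis using orbP_all[OF OP_CV, of P] by simp
    next
      assume "x \<in> TP \<union> MG0" then have "P \<in> sngs (TP \<union> MG0)" unfolding x(2) by (rule imageI)
      then show ?thesis using orbP_all[OF OP_K2, of P] by simp
    next
      assume "x \<in> MG3" then have "P \<in> sngs MG3" unfolding x(2) by (rule imageI)
      then show ?thesis using orbP_all[OF OP_MG3, of P] by simp
    next
      assume "x \<in> MG1" then have "P \<in> sngs MG1" unfolding x(2) by (rule imageI)
      then show ?thesis using orbP_all[OF OP_MG1, of P] by simp
    qed
  qed
  have B: "{V4 1 0 0 0} \<in> points" "{V4 0 1 0 0} \<in> points" "{V4 0 1 1 0} \<in> points"
      "{V4 1 0 0 1} \<in> points"
    unfolding points_bit by (rule imageI, simp add: zero_V4)+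
  show ?thesis unfolding po
  proof (intro equalityI subsetI)
    fix X :: "bit pt set" assume "X \<in> {orbP P |P. P \<in> points}"
    then obtain P where "P \<in> points" "X = orbP P" by blast
    then show "X \<in> {sngs CV, sngs (TP \<union> MG0), sngs MG3, sngs MG1}" using A by simp
  next
    fix X :: "bit pt set" assume "X \<in> {sngs CV, sngs (TP \<union> MG0), sngs MG3, sngs MG1}"
    then have "X = orbP {V4 1 0 0 0} \<or> X = orbP {V4 0 1 0 0} \<or> X = orbP {V4 0 1 1 0} \<or> X = orbP {V4 1 0 0 1}"
      unfolding OP_CV OP_K2 OP_MG3 OP_MG1 by simp
    then show "X \<in> {orbP P |P. P \<in> points}" using B by blast
  qed
qed

theorem theorem4p2:
  defines "N1 \<equiv> (Gamma_planes :: bit pt set set) \<union> onebar_planes"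
      and "N2 \<equiv> (dC_planes 2 :: bit pt set set)"
      and "N3 \<equiv> (dC_planes 3 :: bit pt set set)"
      and "N4 \<equiv> (dC_planes 0 :: bit pt set set)"
      and "M1 \<equiv> (C_points :: bit pt set)"
      and "M2 \<equiv> (T_points :: bit pt set) \<union> muGamma_points 0"
      and "M3 \<equiv> (muGamma_points 3 :: bit pt set)"
      and "M4 \<equiv> (muGamma_points 1 :: bit pt set)"
  shows "plane_orbits = {N1, N2, N3, N4} \<and> card {N1, N2, N3, N4} = 4
       \<and> card (Gamma_planes :: bit pt set set) = 3 \<and> card (onebar_planes :: bit pt set set) = 3
       \<and> card N1 = 6 \<and> card N2 = 6 \<and> card N3 = 1 \<and> card N4 = 2
       \<and> point_orbits = {M1, M2, M3, M4} \<and> card {M1, M2, M3, M4} = 4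
       \<and> card (T_points :: bit pt set) = 6 \<and> card (muGamma_points 0 :: bit pt set) = 2
       \<and> card M1 = 3 \<and> card M2 = 8 \<and> card M3 = 1 \<and> card M4 = 3"
proof -
  have D1: "dC_planes 1 = plane ` PC1" unfolding dC_bit PC1_eq ..
  have eN2: "N2 = plane ` PC2" unfolding assms dC_bit PC2_eq ..
  have eN3: "N3 = plane ` PC3" unfolding assms dC_bit PC3_eq ..
  have eN4: "N4 = plane ` PC0" unfolding assms dC_bit PC0_eq ..
  have G: "(Gamma_planes :: bit pt set set) = plane ` GC" by (rule Gamma_bit)
  have GsubD: "(Gamma_planes :: bit pt set set) \<subseteq> dC_planes 1" unfolding G D1 using GC_sub by blast
  have ob: "(onebar_planes :: bit pt set set) = dC_planes 1 - Gamma_planes"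
    unfolding onebar_planes_def dC_planes_def by blast
  have eN1: "N1 = plane ` PC1" unfolding assms ob using GsubD D1 by blast
  have cG: "card (Gamma_planes :: bit pt set set) = 3" unfolding G card_plane_img card_PC ..
  have obE: "(onebar_planes :: bit pt set set) = plane ` (PC1 - GC)"
    unfolding ob D1 G by (simp add: image_set_diff plane_inj)
  have "card (onebar_planes :: bit pt set set) = card (PC1 - GC)" unfolding obE by (rule card_plane_img)
  also have "\<dots> = 3" using card_Diff_subset[OF _ GC_sub] card_PC by (simp add: GC_def)
  finally have cO: "card (onebar_planes :: bit pt set set) = 3" .
  have neN: "plane ` PC1 \<noteq> plane ` PC2" "plane ` PC1 \<noteq> plane ` PC3" "plane ` PC1 \<noteq> plane ` PC0"
      "plane ` PC2 \<noteq> plane ` PC3" "plane ` PC2 \<noteq> plane ` PC0" "plane ` PC3 \<noteq> plane ` PC0"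
  proof -
    have m: "plane (V4 1 0 0 0) \<in> plane ` PC1" "plane (V4 1 0 0 0) \<notin> plane ` PC2"
      "plane (V4 1 0 0 0) \<notin> plane ` PC3" "plane (V4 1 0 0 0) \<notin> plane ` PC0"
      "plane (V4 0 0 1 0) \<in> plane ` PC2" "plane (V4 0 0 1 0) \<notin> plane ` PC3" "plane (V4 0 0 1 0) \<notin> plane ` PC0"
      "plane (V4 0 1 1 0) \<in> plane ` PC3" "plane (V4 0 1 1 0) \<notin> plane ` PC0"
      unfolding plane_mem by (simp_all add: PC0_def PC1_def PC2_def PC3_def)
    show "plane ` PC1 \<noteq> plane ` PC2" "plane ` PC1 \<noteq> plane ` PC3" "plane ` PC1 \<noteq> plane ` PC0"
      "plane ` PC2 \<noteq> plane ` PC3" "plane ` PC2 \<noteq> plane ` PC0" "plane ` PC3 \<noteq> plane ` PC0"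
      using m by blast+
  qed
  have eM1: "M1 = sngs CV" unfolding assms C_points_def Cub_bit ..
  have eM2: "M2 = sngs (TP \<union> MG0)" unfolding assms T_bit muG_bit MG0_eq image_Un ..
  have eM3: "M3 = sngs MG3" unfolding assms muG_bit MG3_eq ..
  have eM4: "M4 = sngs MG1" unfolding assms muG_bit MG1_eq ..
  have neM: "sngs CV \<noteq> sngs (TP \<union> MG0)" "sngs CV \<noteq> sngs MG3" "sngs CV \<noteq> sngs MG1"
      "sngs (TP \<union> MG0) \<noteq> sngs MG3" "sngs (TP \<union> MG0) \<noteq> sngs MG1" "sngs MG3 \<noteq> sngs MG1"
  proof -
    have m: "{V4 1 0 0 0} \<in> sngs CV" "{V4 1 0 0 0} \<notin> sngs (TP \<union> MG0)"
      "{V4 1 0 0 0} \<notin> sngs MG3" "{V4 1 0 0 0} \<notin> sngs MG1"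
      "{V4 0 1 0 0} \<in> sngs (TP \<union> MG0)" "{V4 0 1 0 0} \<notin> sngs MG3" "{V4 0 1 0 0} \<notin> sngs MG1"
      "{V4 0 1 1 0} \<in> sngs MG3" "{V4 0 1 1 0} \<notin> sngs MG1"
      unfolding sng_mem by (simp_all add: CV_def TP_def MG0_def MG3_def MG1_def)
    show "sngs CV \<noteq> sngs (TP \<union> MG0)" "sngs CV \<noteq> sngs MG3" "sngs CV \<noteq> sngs MG1"
      "sngs (TP \<union> MG0) \<noteq> sngs MG3" "sngs (TP \<union> MG0) \<noteq> sngs MG1" "sngs MG3 \<noteq> sngs MG1"
      using m by blast+
  qed
  have cT: "card (T_points :: bit pt set) = 6" unfolding T_bit card_sngs by (simp add: TP_def)
  have cM0: "card (muGamma_points 0 :: bit pt set) = 2" unfolding muG_bit MG0_eq card_sngs by (simp add: MG0_def)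
  have cM2: "card (TP \<union> MG0) = 8" by (simp add: TP_def MG0_def)
  note neN' = neN neN[symmetric]
  note neM' = neM neM[symmetric]
  show ?thesis
    unfolding eN1 eN2 eN3 eN4 eM1 eM2 eM3 eM4
  proof (intro conjI)
    show "plane_orbits = {plane ` PC1, plane ` PC2, plane ` PC3, plane ` PC0}" by (rule plane_orbits_bit)
    have "card (set [plane ` PC1, plane ` PC2, plane ` PC3, plane ` PC0]) = 4"
      by (subst distinct_card) (use neN in auto)
    then show "card {plane ` PC1, plane ` PC2, plane ` PC3, plane ` PC0} = 4" by simp
    show "point_orbits = {sngs CV, sngs (TP \<union> MG0), sngs MG3, sngs MG1}" by (rule point_orbits_bit)
    have "card (set [sngs CV, sngs (TP \<union> MG0), sngs MG3, sngs MG1]) = 4"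
      by (subst distinct_card) (use neM in auto)
    then show "card {sngs CV, sngs (TP \<union> MG0), sngs MG3, sngs MG1} = 4" by simp
    show "card (plane ` PC1) = 6" "card (plane ` PC2) = 6" "card (plane ` PC3) = 1" "card (plane ` PC0) = 2"
      unfolding card_plane_img card_PC by simp_all
    show "card (sngs CV) = 3" unfolding card_sngs by (simp add: CV_def)
    show "card (sngs (TP \<union> MG0)) = 8" unfolding card_sngs by (rule cM2)
    show "card (sngs MG3) = 1" unfolding card_sngs by (simp add: MG3_def)
    show "card (sngs MG1) = 3" unfolding card_sngs by (simp add: MG1_def)
  qed (rule cG cO cT cM0)+
qed

end
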